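(* Let $R_e\approx1.4877$ be the unique positive root of $\frac{10}{7(R+1)}-\frac{R^2\sqrt{R}}{R^2+R+1}=0$, and let $\tau_k>0$ be time steps with ratios $r_k=\tau_k/\tau_{k-1}\in(0,R_e)$ for all $k\ge2$. Then for every $n\ge3$ and every nonzero vector $(\xi_3,\dots,\xi_n)$ of reals, $$2\sum_{k=3}^n\xi_k\sum_{j=3}^k\tau_k\vartheta^{(k)}_{k-j}\xi_j>0 .$$
   Context: For $x,y\ge0$: $d_0(x,y)=\frac{1+2x}{1+x}+\frac{xy}{1+y+xy}$, $d_1(x,y)=-\frac{x}{1+x}-\frac{xy}{1+y+xy}-\frac{xy^2}{1+y+xy}\frac{1+x}{1+y}$, $d_2(x,y)=\frac{xy^2}{1+y+xy}\frac{1+x}{1+y}$. BDF3 kernels: $d^{(n)}_j=d_j(r_n,r_{n-1})$ for $j=0,1,2$, $d^{(n)}_j=0$ for $j\ge3$. The discrete orthogonal convolution (DOC) kernels are defined recursively for each fixed $n\ge3$ by $\vartheta^{(n)}_0=1/d^{(n)}_0$ and $\vartheta^{(n)}_{n-j}=-\frac{1}{d^{(j)}_0}\sum_{i=j+1}^n\vartheta^{(n)}_{n-i}d^{(i)}_{i-j}$ for $3\le j\le n-1$. *)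

theory Defs
  imports Complex_Main
begin

definition Re_root :: real where
  "Re_root = (THE R. R > 0 \<and> 10 / (7 * (R + 1)) - R^2 * sqrt R / (R^2 + R + 1) = 0)"

definition d0 :: "real \<Rightarrow> real \<Rightarrow> real" where
  "d0 x y = (1 + 2*x) / (1 + x) + x*y / (1 + y + x*y)"

definition d1 :: "real \<Rightarrow> real \<Rightarrow> real" where
  "d1 x y = - x / (1 + x) - x*y / (1 + y + x*y) - x*y^2 / (1 + y + x*y) * ((1 + x) / (1 + y))"

definition d2 :: "real \<Rightarrow> real \<Rightarrow> real" where
  "d2 x y = x*y^2 / (1 + y + x*y) * ((1 + x) / (1 + y))"

definition ratio :: "(nat \<Rightarrow> real) \<Rightarrow> nat \<Rightarrow> real" where
  "ratio tau k = tau k / tau (k - 1)"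

definition bdf3 :: "(nat \<Rightarrow> real) \<Rightarrow> nat \<Rightarrow> nat \<Rightarrow> real" where
  "bdf3 tau n j =
     (if j = 0 then d0 (ratio tau n) (ratio tau (n - 1))
      else if j = 1 then d1 (ratio tau n) (ratio tau (n - 1))
      else if j = 2 then d2 (ratio tau n) (ratio tau (n - 1))
      else 0)"

text \<open>DOC kernels: doc tau n m = vartheta^(n)_m. With m = n - j the recursion
  vartheta^(n)_(n-j) = -1/d^(j)_0 * sum_(i=j+1..n) vartheta^(n)_(n-i) d^(i)_(i-j)
  becomes, with l = n - i, the sum over l < m below.\<close>
fun doc :: "(nat \<Rightarrow> real) \<Rightarrow> nat \<Rightarrow> nat \<Rightarrow> real" where
  "doc tau n m =
     (if m = 0 then 1 / bdf3 tau n 0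
      else - (1 / bdf3 tau (n - m) 0) *
             (\<Sum>l\<in>{..<m}. doc tau n l * bdf3 tau (n - l) (m - l)))"

end

theory Submission imports Defs begin
definition denp :: "real \<Rightarrow> real \<Rightarrow> real" where
  "denp r s = (1+r)*(1+s)*(1+s+r*s)"
definition d0p :: "real \<Rightarrow> real \<Rightarrow> real" where
  "d0p r s = (1+2*r)*(1+s)*(1+s+r*s) + r*s*(1+r)*(1+s)"
definition d2p :: "real \<Rightarrow> real \<Rightarrow> real" where
  "d2p r s = r*s^2*(1+r)^2"
definition d1p :: "real \<Rightarrow> real \<Rightarrow> real" where
  "d1p r s = denp r s - d0p r s - d2p r s"
definition Ap :: "real \<Rightarrow> real \<Rightarrow> real" where
  "Ap r s = d0p r s - (187/200) * denp r s"
definition Bp :: "real \<Rightarrow> real \<Rightarrow> real" where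
  "Bp r s = d1p r s + (59/100) * denp r s"

definition P1 :: "real => real => real" where
  "P1 r s = (13/200) + (13/100)*s^1 + (13/200)*s^2 + (213/200)*r^1 + (639/200)*r^1*s^1 + (213/100)*r^1*s^2 + (413/200)*r^2*s^1 + (413/200)*r^2*s^2"

lemma P1_bern: "3^4 * P1 r s = (13/200)*r^0*(3-2*r)^2*s^0*(3-2*s)^2 + (13/20)*r^0*(3-2*r)^2*s^1*(3-2*s)^1 + (13/8)*r^0*(3-2*r)^2*s^2*(3-2*s)^0 + (691/200)*r^1*(3-2*r)^1*s^0*(3-2*s)^2 + (8827/200)*r^1*(3-2*r)^1*s^1*(3-2*s)^1 + (1343/10)*r^1*(3-2*r)^1*s^2*(3-2*s)^0 + (133/20)*r^2*(3-2*r)^0*s^0*(3-2*s)^2 + (5657/40)*r^2*(3-2*r)^0*s^1*(3-2*s)^1 + (4327/8)*r^2*(3-2*r)^0*s^2*(3-2*s)^0"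
  unfolding P1_def by algebra

definition P2 :: "real => real => real" where
  "P2 r s = (299/2000) + (299/500)*s^1 + (897/1000)*s^2 + (299/500)*s^3 + (299/2000)*s^4 + (22509/10000)*r^1 + (58013/5000)*r^1*s^1 + (13314/625)*r^1*s^2 + (84003/5000)*r^1*s^3 + (48499/10000)*r^1*s^4 + (29333/10000)*r^2 + (4403/200)*r^2*s^1 + (520747/10000)*r^2*s^2 + (62297/1250)*r^2*s^3 + (84223/5000)*r^2*s^4 + (-1681/10000)*r^3 + (39271/5000)*r^3*s^1 + (331421/10000)*r^3*s^2 + (103073/2500)*r^3*s^3 + (75547/5000)*r^3*s^4 + (-5781/5000)*r^4*s^1 + (-3353/10000)*r^4*s^2 + (-831/500)*r^4*s^3 + (-64829/10000)*r^4*s^4 + (-28081/10000)*r^5*s^2 + (-60381/5000)*r^5*s^3 + (-152681/10000)*r^5*s^4 + (-141/50)*r^6*s^3 + (-341/50)*r^6*s^4 + (-1)*r^7*s^4"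

lemma P2_bern: "3^11 * P2 r s = (299/2000)*r^0*(3-2*r)^7*s^0*(3-2*s)^4 + (299/100)*r^0*(3-2*r)^7*s^1*(3-2*s)^3 + (897/40)*r^0*(3-2*r)^7*s^2*(3-2*s)^2 + (299/4)*r^0*(3-2*r)^7*s^3*(3-2*s)^1 + (1495/16)*r^0*(3-2*r)^7*s^4*(3-2*s)^0 + (88457/10000)*r^1*(3-2*r)^6*s^0*(3-2*s)^4 + (40061/200)*r^1*(3-2*r)^6*s^1*(3-2*s)^3 + (41943/25)*r^1*(3-2*r)^6*s^2*(3-2*s)^2 + (247087/40)*r^1*(3-2*r)^6*s^3*(3-2*s)^1 + (135239/16)*r^1*(3-2*r)^6*s^4*(3-2*s)^0 + (1199901/10000)*r^2*(3-2*r)^5*s^0*(3-2*s)^4 + (14790513/5000)*r^2*(3-2*r)^5*s^1*(3-2*s)^3 + (53334027/2000)*r^2*(3-2*r)^5*s^2*(3-2*s)^2 + (10480749/100)*r^2*(3-2*r)^5*s^3*(3-2*s)^1 + (1217049/8)*r^2*(3-2*r)^5*s^4*(3-2*s)^0 + (7064803/10000)*r^3*(3-2*r)^4*s^0*(3-2*s)^4 + (94999033/5000)*r^3*(3-2*r)^4*s^1*(3-2*s)^3 + (1840476777/10000)*r^3*(3-2*r)^4*s^2*(3-2*s)^2 + (192033413/250)*r^3*(3-2*r)^4*s^3*(3-2*s)^1 + (234142991/200)*r^3*(3-2*r)^4*s^4*(3-2*s)^0 + (1364894/625)*r^4*(3-2*r)^3*s^0*(3-2*s)^4 + (318838961/5000)*r^4*(3-2*r)^3*s^1*(3-2*s)^3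 + (6596479083/10000)*r^4*(3-2*r)^3*s^2*(3-2*s)^2 + (361409201/125)*r^4*(3-2*r)^3*s^3*(3-2*s)^1 + (1811004143/400)*r^4*(3-2*r)^3*s^4*(3-2*s)^0 + (4655199/1250)*r^5*(3-2*r)^2*s^0*(3-2*s)^4 + (292989207/2500)*r^5*(3-2*r)^2*s^1*(3-2*s)^3 + (12803797503/10000)*r^5*(3-2*r)^2*s^2*(3-2*s)^2 + (5760945993/1000)*r^5*(3-2*r)^2*s^3*(3-2*s)^1 + (3515618823/400)*r^5*(3-2*r)^2*s^4*(3-2*s)^0 + (416279/125)*r^6*(3-2*r)^1*s^0*(3-2*s)^4 + (28008467/250)*r^6*(3-2*r)^1*s^1*(3-2*s)^3 + (318496137/250)*r^6*(3-2*r)^1*s^2*(3-2*s)^2 + (141030047/25)*r^6*(3-2*r)^1*s^3*(3-2*s)^1 + (35928671/5)*r^6*(3-2*r)^1*s^4*(3-2*s)^0 + (30587/25)*r^7*(3-2*r)^0*s^0*(3-2*s)^4 + (1091323/25)*r^7*(3-2*r)^0*s^1*(3-2*s)^3 + (50771127/100)*r^7*(3-2*r)^0*s^2*(3-2*s)^2 + (20467387/10)*r^7*(3-2*r)^0*s^3*(3-2*s)^1 + (3463907/4)*r^7*(3-2*r)^0*s^4*(3-2*s)^0"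
  unfolding P2_def by algebra

definition P3 :: "real => real => real" where
  "P3 r s = (2093/40000) + (373347/2000000)*s^1 + (55861/250000)*s^2 + (73541/1000000)*s^3 + (-38181/1000000)*s^4 + (-45253/2000000)*s^5 + (157563/200000)*r^1 + (3667557/1000000)*r^1*s^1 + (219563/40000)*r^1*s^2 + (2340033/1000000)*r^1*s^3 + (-528003/500000)*r^1*s^4 + (-393353/500000)*r^1*s^5 + (205331/200000)*r^2 + (14669047/2000000)*r^2*s^1 + (15260333/1000000)*r^2*s^2 + (20102513/2000000)*r^2*s^3 + (-1473667/1000000)*r^2*s^4 + (-2572459/1000000)*r^2*s^5 + (-11767/200000)*r^3 + (274897/100000)*r^3*s^1 + (5255091/500000)*r^3*s^2 + (2404427/250000)*r^3*s^3 + (-33047/40000)*r^3*s^4 + (-1188253/500000)*r^3*s^5 + (-40467/100000)*r^4*s^1 + (-23471/200000)*r^4*s^2 + (-2329653/2000000)*r^4*s^3 + (-132473/62500)*r^4*s^4 + (1585147/2000000)*r^4*s^5 + (-196567/200000)*r^5*s^2 + (-398477/100000)*r^5*s^3 + (-590867/200000)*r^5*s^4 + (2797/1250)*r^5*s^5 + (-987/1000)*r^6*s^3 + (-15551/10000)*r^6*s^4 + (8919/10000)*r^6*s^5 + (-7/20)*r^7*s^4 + (3/200)*r^7*s^5"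

lemma P3_bern: "3^12 * P3 r s = (2093/40000)*r^0*(3-2*r)^7*s^0*(3-2*s)^5 + (2166541/2000000)*r^0*(3-2*r)^7*s^1*(3-2*s)^4 + (53651/6250)*r^0*(3-2*r)^7*s^2*(3-2*s)^3 + (1267123/40000)*r^0*(3-2*r)^7*s^3*(3-2*s)^2 + (408707/8000)*r^0*(3-2*r)^7*s^4*(3-2*s)^1 + (73541/3200)*r^0*(3-2*r)^7*s^5*(3-2*s)^0 + (619199/200000)*r^1*(3-2*r)^6*s^0*(3-2*s)^5 + (287233/4000)*r^1*(3-2*r)^6*s^1*(3-2*s)^4 + (626985169/1000000)*r^1*(3-2*r)^6*s^2*(3-2*s)^3 + (500706757/200000)*r^1*(3-2*r)^6*s^3*(3-2*s)^2 + (10601477/2500)*r^1*(3-2*r)^6*s^4*(3-2*s)^1 + (14260669/8000)*r^1*(3-2*r)^6*s^5*(3-2*s)^0 + (8399307/200000)*r^2*(3-2*r)^5*s^0*(3-2*s)^5 + (84890829/80000)*r^2*(3-2*r)^5*s^1*(3-2*s)^4 + (9992692437/1000000)*r^2*(3-2*r)^5*s^2*(3-2*s)^3 + (85464774231/2000000)*r^2*(3-2*r)^5*s^3*(3-2*s)^2 + (15440089551/200000)*r^2*(3-2*r)^5*s^4*(3-2*s)^1 + (1392347433/40000)*r^2*(3-2*r)^5*s^5*(3-2*s)^0 + (49453621/200000)*r^3*(3-2*r)^4*s^0*(3-2*s)^5 + (1362591097/200000)*r^3*(3-2*r)^4*s^1*(3-2*s)^4 + (4311446501/62500)*r^3*(3-2*r)^4*s^2*(3-2*s)^3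 + (313533773623/1000000)*r^3*(3-2*r)^4*s^3*(3-2*s)^2 + (119151620741/200000)*r^3*(3-2*r)^4*s^4*(3-2*s)^1 + (5606991899/20000)*r^3*(3-2*r)^4*s^5*(3-2*s)^0 + (4777129/6250)*r^4*(3-2*r)^3*s^0*(3-2*s)^5 + (2284258309/100000)*r^4*(3-2*r)^3*s^1*(3-2*s)^4 + (246795721813/1000000)*r^4*(3-2*r)^3*s^2*(3-2*s)^3 + (2352759132397/2000000)*r^4*(3-2*r)^3*s^3*(3-2*s)^2 + (229966223411/100000)*r^4*(3-2*r)^3*s^4*(3-2*s)^1 + (87850608877/80000)*r^4*(3-2*r)^3*s^5*(3-2*s)^0 + (32586393/25000)*r^5*(3-2*r)^2*s^0*(3-2*s)^5 + (10482343419/250000)*r^5*(3-2*r)^2*s^1*(3-2*s)^4 + (477736924269/1000000)*r^5*(3-2*r)^2*s^2*(3-2*s)^3 + (2333456520639/1000000)*r^5*(3-2*r)^2*s^3*(3-2*s)^2 + (900776866143/200000)*r^5*(3-2*r)^2*s^4*(3-2*s)^1 + (85071179949/40000)*r^5*(3-2*r)^2*s^5*(3-2*s)^0 + (2913953/2500)*r^6*(3-2*r)^1*s^0*(3-2*s)^5 + (500401537/12500)*r^6*(3-2*r)^1*s^1*(3-2*s)^4 + (11849492441/25000)*r^6*(3-2*r)^1*s^2*(3-2*s)^3 + (227882066299/100000)*r^6*(3-2*r)^1*s^3*(3-2*s)^2 + (19647921347/5000)*r^6*(3-2*r)^1*s^4*(3-2*s)^1 + (6978455509/4000)*r^6*(3-2*r)^1*s^5*(3-2*s)^0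 + (214109/500)*r^7*(3-2*r)^0*s^0*(3-2*s)^5 + (9737119/625)*r^7*(3-2*r)^0*s^1*(3-2*s)^4 + (1883850481/10000)*r^7*(3-2*r)^0*s^2*(3-2*s)^3 + (8295764141/10000)*r^7*(3-2*r)^0*s^3*(3-2*s)^2 + (1704707617/2000)*r^7*(3-2*r)^0*s^4*(3-2*s)^1 + (67312031/400)*r^7*(3-2*r)^0*s^5*(3-2*s)^0"
  unfolding P3_def by algebra

lemma P1_eq: "P1 r s = Ap r s"
  unfolding P1_def Ap_def d0p_def denp_def by algebra

lemma P2_eq: "P2 r s = (23/10) * Ap r s * denp r s - r * (Bp r s)^2"
  unfolding P2_def Ap_def Bp_def d1p_def d2p_def d0p_def denp_def by algebra

lemma P3_eq: "P3 r s = 4*(23/40)*(7/20) * Ap r s * denp r s + (-59/100)*r*s*Bp r s * d2p r s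
   - s*(-59/100)^2 * Ap r s * denp r s - r*(7/20)*(Bp r s)^2 - r*s*(23/40)*(d2p r s)^2"
  unfolding P3_def Ap_def Bp_def d1p_def d2p_def d0p_def denp_def by algebra

lemma Ppos:
  fixes r s :: real
  assumes "0 < r" "r < 3/2" "0 < s" "s < 3/2"
  shows "0 < P1 r s" "0 < P2 r s" "0 < P3 r s"
proof -
  have h: "0 < 3-2*r" "0 < 3-2*s" using assms by auto
  have "0 < 3^4 * P1 r s" unfolding P1_bern using assms h
    by (intro add_pos_pos mult_pos_pos zero_less_power; simp)
  then show "0 < P1 r s" by (simp add: zero_less_mult_iff)
  have "0 < 3^11 * P2 r s" unfolding P2_bern using assms h
    by (intro add_pos_pos mult_pos_pos zero_less_power; simp)
  then show "0 < P2 r s" by (simp add: zero_less_mult_iff)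
  have "0 < 3^12 * P3 r s" unfolding P3_bern using assms h
    by (intro add_pos_pos mult_pos_pos zero_less_power; simp)
  then show "0 < P3 r s" by (simp add: zero_less_mult_iff)
qed

lemma quad3:
  fixes A B C D E F x y z :: real
  assumes "A > 0" "4*A*D - B^2 > 0" "4*A*D*F + B*C*E - A*E^2 - B^2*F - C^2*D \<ge> 0"
  shows "A*x^2 + B*x*y + C*x*z + D*y^2 + E*y*z + F*z^2 \<ge> 0"
proof -
  define K where "K = 4*A*D - B^2"
  define dt where "dt = 4*A*D*F + B*C*E - A*E^2 - B^2*F - C^2*D"
  have id: "4*A*K*(A*x^2 + B*x*y + C*x*z + D*y^2 + E*y*z + F*z^2)
     = K*(2*A*x+B*y+C*z)^2 + (K*y + (2*A*E - B*C)*z)^2 + 4*A*dt*z^2"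
    unfolding K_def dt_def by algebra
  have "0 \<le> K*(2*A*x+B*y+C*z)^2 + (K*y + (2*A*E - B*C)*z)^2 + 4*A*dt*z^2"
    using assms unfolding K_def dt_def by (intro add_nonneg_nonneg mult_nonneg_nonneg) auto
  then have "0 \<le> (4*A*K)*(A*x^2 + B*x*y + C*x*z + D*y^2 + E*y*z + F*z^2)" using id by simp
  moreover have "0 < 4*A*K" using assms unfolding K_def by simp
  ultimately show ?thesis by (smt (verit) mult_pos_neg)
qed
lemma denp_pos: "0 < r \<Longrightarrow> 0 < s \<Longrightarrow> 0 < denp r s"
  unfolding denp_def by (simp add: add_pos_pos)

lemma d_eqs:
  fixes r s :: real
  assumes "0<r" "0<s"
  shows "d0 r s * denp r s = d0p r s" "d2 r s * denp r s = d2p r s" "d1 r s * denp r s = d1p r s"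
proof -
  have p: "0<1+r" "0<1+s" "0 < 1+s+r*s" using assms by (simp_all add: add_pos_pos)
  have b: "r*s/(1+s+r*s) * ((1+r)*(1+s)*(1+s+r*s)) = r*s*(1+r)*(1+s)"
    using p by simp
  have a: "(1+2*r)/(1+r) * ((1+r)*(1+s)*(1+s+r*s)) = (1+2*r)*(1+s)*(1+s+r*s)"
    using p by simp
  have g: "\<And>X. d0 r s * X = (1+2*r)/(1+r)*X + r*s/(1+s+r*s)*X" unfolding d0_def by (rule distrib_right)
  show "d0 r s * denp r s = d0p r s" unfolding denp_def d0p_def g a b ..
  show "d2 r s * denp r s = d2p r s" unfolding d2_def denp_def d2p_def using p by (simp add: power2_eq_square)
  have a2: "(-r)/(1+r) * ((1+r)*(1+s)*(1+s+r*s)) = -r*(1+s)*(1+s+r*s)"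
    using p by simp
  have c: "r*s^2/(1+s+r*s) * ((1+r)/(1+s)) * ((1+r)*(1+s)*(1+s+r*s)) = r*s^2*(1+r)^2"
    using p by (simp add: power2_eq_square)
  have g1: "\<And>X. d1 r s * X = (-r)/(1+r)*X - r*s/(1+s+r*s)*X - r*s^2/(1+s+r*s) * ((1+r)/(1+s))*X"
    unfolding d1_def by (simp add: algebra_simps)
  have "d1 r s * denp r s = -r*(1+s)*(1+s+r*s) - r*s*(1+r)*(1+s) - r*s^2*(1+r)^2"
    unfolding denp_def g1 a2 b c by (simp add: algebra_simps)
  then show "d1 r s * denp r s = d1p r s" unfolding d1p_def d0p_def d2p_def denp_def
    by (simp add: algebra_simps)
qed

lemma key:
  fixes t0 t1 t2 x y z :: real
  assumes "0<t0" "0<t1" "0<t2" "t0/t1 < 3/2" "t1/t2 < 3/2"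
  shows "t0*x*(d0 (t0/t1) (t1/t2) * x + d1 (t0/t1) (t1/t2) * y + d2 (t0/t1) (t1/t2) * z)
     \<ge> (t0*((37/40)*x^2 + (-59/100)*x*y) + (7/20)*t1*y^2)
       - (t1*((37/40)*y^2 + (-59/100)*y*z) + (7/20)*t2*z^2) + (1/100)*t0*x^2"
proof -
  define r where "r = t0/t1"
  define s where "s = t1/t2"
  have r0: "0 < r" and s0: "0 < s" using assms unfolding r_def s_def by auto
  have r1: "r < 3/2" and s1: "s < 3/2" using assms unfolding r_def s_def by auto
  have ht1: "t1 = s*t2" unfolding s_def using assms by simp
  have ht0: "t0 = r*s*t2" unfolding r_def s_def using assms by simp
  have e0: "d0 r s * denp r s = d0p r s" and e1: "d1 r s * denp r s = d1p r s"
    and e2: "d2 r s * denp r s = d2p r s" using d_eqs[OF r0 s0] by auto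
  define A where "A = r*s*Ap r s"
  define B where "B = r*s*Bp r s"
  define C where "C = r*s*d2p r s"
  define D where "D = s*(23/40)*denp r s"
  define E where "E = s*(-59/100)*denp r s"
  define F where "F = (7/20)*denp r s"
  have P: "0 < P1 r s" "0 < P2 r s" "0 < P3 r s" using Ppos r0 r1 s0 s1 by auto
  have q: "A*x^2 + B*x*y + C*x*z + D*y^2 + E*y*z + F*z^2 \<ge> 0"
  proof (rule quad3)
    show "A > 0" unfolding A_def using P r0 s0 by (simp add: P1_eq)
    have "4*A*D - B^2 = r*s^2*P2 r s" unfolding A_def D_def B_def P2_eq by algebra
    then show "4*A*D - B^2 > 0" using P r0 s0 by simp
    have "4*A*D*F + B*C*E - A*E^2 - B^2*F - C^2*D = r*s^2*denp r s*P3 r s"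
      unfolding A_def B_def C_def D_def E_def F_def P3_eq by algebra
    then show "4*A*D*F + B*C*E - A*E^2 - B^2*F - C^2*D \<ge> 0"
      using P r0 s0 denp_pos[OF r0 s0] by simp
  qed
  have main: "denp r s * (t0*x*(d0 r s * x + d1 r s * y + d2 r s * z)
     - ((t0*((37/40)*x^2 + (-59/100)*x*y) + (7/20)*t1*y^2)
       - (t1*((37/40)*y^2 + (-59/100)*y*z) + (7/20)*t2*z^2) + (1/100)*t0*x^2))
     = t2 * (A*x^2 + B*x*y + C*x*z + D*y^2 + E*y*z + F*z^2)"
    unfolding A_def B_def C_def D_def E_def F_def Ap_def Bp_def d1p_def
    using ht0 ht1 e0 e1 e2 unfolding d1p_def by algebra
  have "0 \<le> denp r s * (t0*x*(d0 r s * x + d1 r s * y + d2 r s * z)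
     - ((t0*((37/40)*x^2 + (-59/100)*x*y) + (7/20)*t1*y^2)
       - (t1*((37/40)*y^2 + (-59/100)*y*z) + (7/20)*t2*z^2) + (1/100)*t0*x^2))"
    unfolding main using q assms by simp
  then show ?thesis using denp_pos[OF r0 s0] unfolding r_def s_def
    by (simp add: zero_le_mult_iff)
qed
lemma Re_root_lt: "Re_root < 3/2"
proof -
  define f where "f = (\<lambda>R::real. 10 / (7 * (R + 1)) - R^2 * sqrt R / (R^2 + R + 1))"
  have big: "f R < 0" if R: "R \<ge> 3/2" for R
  proof -
    have pos: "0 < R^2+R+1" using R by (simp add: add_pos_pos)
    have a1: "10/(7*(R+1)) \<le> 4/7" using R by (simp add: divide_simps)
    have s1: "76/63 < sqrt (3/2)" by (rule real_less_rsqrt) (simp add: power2_eq_square)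
    have s2: "sqrt (3/2) \<le> sqrt R" using R by simp
    have e: "10*R^2 - 9*R - 9 = (R - 3/2)*(10*R+6)" by algebra
    have "0 \<le> (R - 3/2)*(10*R+6)" using R by simp
    then have "9*(R^2+R+1) \<le> 19*R^2" using e by simp
    then have g: "9/19 \<le> R^2/(R^2+R+1)" using pos by (simp add: divide_simps)
    have s3: "76/63 < sqrt R" using s1 s2 by linarith
    have "4/7 = (9/19)*(76/63::real)" by simp
    also have "\<dots> < (9/19) * sqrt R" using s3 by simp
    also have "\<dots> \<le> R^2/(R^2+R+1) * sqrt R" using g R by (intro mult_right_mono) auto
    also have "\<dots> = R^2 * sqrt R / (R^2 + R + 1)" by simp
    finally have "4/7 < R^2 * sqrt R / (R^2 + R + 1)" .
    then show ?thesis unfolding f_def using a1 by linarith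
  qed
  have mono: "f R2 < f R1" if R: "0 < R1" "R1 < R2" for R1 R2
  proof -
    have a: "10 / (7 * (R2 + 1)) < 10 / (7 * (R1 + 1))" using R by (simp add: divide_simps)
    have p1: "0 < R1^2+R1+1" "0 < R2^2+R2+1" using R by (simp_all add: add_pos_pos)
    have h1: "R1^2*R2 \<le> R1*R2^2" using R by (simp add: power2_eq_square mult_left_mono mult_right_mono)
    have h2: "R1^2 \<le> R2^2" using R by (simp add: power_mono)
    have "R1^2*(R2^2+R2+1) \<le> R2^2*(R1^2+R1+1)" using h1 h2 by (simp add: algebra_simps power2_eq_square)
    then have g: "R1^2/(R1^2+R1+1) \<le> R2^2/(R2^2+R2+1)" using p1 by (simp add: divide_simps)
    have "R1^2/(R1^2+R1+1) * sqrt R1 \<le> R2^2/(R2^2+R2+1) * sqrt R2"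
      using g R by (intro mult_mono) auto
    then have "R1^2 * sqrt R1 / (R1^2 + R1 + 1) \<le> R2^2 * sqrt R2 / (R2^2 + R2 + 1)" by simp
    then show ?thesis unfolding f_def using a by simp
  qed
  have f1: "f 1 \<ge> 0" unfolding f_def by simp
  have cont: "continuous_on {1..3/2} f" unfolding f_def
    apply (intro continuous_intros)
    apply auto
    by (smt (verit) zero_le_power2)
  obtain R0 where R0: "1 \<le> R0" "R0 \<le> 3/2" "f R0 = 0"
    using IVT2'[of f "3/2" 0 1] big[of "3/2"] f1 cont by force
  have ex1: "\<exists>!R. R > 0 \<and> f R = 0"
  proof (rule ex1I[of _ R0])
    show "R0 > 0 \<and> f R0 = 0" using R0 by simp
    show "R = R0" if "R > 0 \<and> f R = 0" for R
      using mono[of R R0] mono[of R0 R] that R0 by (cases R R0 rule: linorder_cases) auto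
  qed
  have "Re_root = (THE R. R > 0 \<and> f R = 0)" by (simp add: Re_root_def f_def)
  then have "Re_root > 0 \<and> f Re_root = 0" using theI'[OF ex1] by simp
  then show ?thesis using big[of Re_root] by linarith
qed
declare doc.simps[simp del]

fun wv :: "(nat \<Rightarrow> real) \<Rightarrow> (nat \<Rightarrow> real) \<Rightarrow> nat \<Rightarrow> real" where
  "wv tau xi k = (if k < 3 then 0 else
     (xi k - bdf3 tau k 1 * wv tau xi (k-1) - bdf3 tau k 2 * wv tau xi (k-2)) / bdf3 tau k 0)"

declare wv.simps[simp del]

lemma wv_small: "k < 3 \<Longrightarrow> wv tau xi k = 0"
  by (simp add: wv.simps)

lemma d0_pos: "0 < x \<Longrightarrow> 0 < y \<Longrightarrow> 0 < d0 x y"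
  unfolding d0_def by (intro add_pos_nonneg divide_pos_pos) (auto simp: add_pos_pos)

lemma xi_rep:
  assumes "3 \<le> k" "bdf3 tau k 0 \<noteq> 0"
  shows "xi k = bdf3 tau k 0 * wv tau xi k + bdf3 tau k 1 * wv tau xi (k-1) + bdf3 tau k 2 * wv tau xi (k-2)"
proof -
  have "wv tau xi k = (xi k - bdf3 tau k 1 * wv tau xi (k-1) - bdf3 tau k 2 * wv tau xi (k-2)) / bdf3 tau k 0"
    using assms by (simp add: wv.simps[of tau xi k])
  then show ?thesis using assms(2) by (simp add: field_simps)
qed

lemma xi_sum:
  assumes "3 \<le> k"
  shows "(\<Sum>i=3..k. bdf3 tau k (k-i) * wv tau xi i)
     = bdf3 tau k 0 * wv tau xi k + bdf3 tau k 1 * wv tau xi (k-1) + bdf3 tau k 2 * wv tau xi (k-2)"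
proof -
  have "(\<Sum>i=3..k. bdf3 tau k (k-i) * wv tau xi i) = (\<Sum>i=0..k. bdf3 tau k (k-i) * wv tau xi i)"
    by (rule sum.mono_neutral_left) (auto simp: wv_small)
  also have "\<dots> = bdf3 tau k 0 * wv tau xi k + bdf3 tau k 1 * wv tau xi (k-1) + bdf3 tau k 2 * wv tau xi (k-2)"
  proof -
    define p where "p = k - 3"
    have k: "k = Suc (Suc (Suc p))" using assms unfolding p_def by arith
    have z: "(\<Sum>i=0..p. bdf3 tau k (k-i) * wv tau xi i) = 0"
      by (rule sum.neutral) (auto simp: bdf3_def k)
    have "(\<Sum>i=0..k. bdf3 tau k (k-i) * wv tau xi i) = (\<Sum>i=0..p. bdf3 tau k (k-i) * wv tau xi i)
       + bdf3 tau k (k - Suc p) * wv tau xi (Suc p) + bdf3 tau k (k - Suc (Suc p)) * wv tau xi (Suc (Suc p))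
       + bdf3 tau k (k - k) * wv tau xi k"
      unfolding k by (simp add: sum.atLeast0_atMost_Suc)
    also have "\<dots> = bdf3 tau k 0 * wv tau xi k + bdf3 tau k 1 * wv tau xi (k-1) + bdf3 tau k 2 * wv tau xi (k-2)"
      using z by (simp add: k numeral_2_eq_2)
    finally show ?thesis .
  qed
  finally show ?thesis .
qed

lemma doc_inv:
  assumes d0nz: "\<And>k. k \<ge> 3 \<Longrightarrow> bdf3 tau k 0 \<noteq> 0" and i3: "3 \<le> i" and "i \<le> n"
  shows "(\<Sum>j=i..n. doc tau n (n-j) * bdf3 tau j (j-i)) = (if i = n then 1 else 0)"
proof (cases "i = n")
  case True
  then show ?thesis using d0nz[of n] assms by (simp add: doc.simps[of tau n 0])
next
  case False
  then have lt: "i < n" using assms by simp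
  have split: "{i..n} = insert i {Suc i..n}" using lt by auto
  have s1: "(\<Sum>j=i..n. doc tau n (n-j) * bdf3 tau j (j-i))
      = doc tau n (n-i) * bdf3 tau i 0 + (\<Sum>j=Suc i..n. doc tau n (n-j) * bdf3 tau j (j-i))"
    unfolding split by simp
  have s2: "(\<Sum>j=Suc i..n. doc tau n (n-j) * bdf3 tau j (j-i))
      = (\<Sum>l<n-i. doc tau n l * bdf3 tau (n-l) (n-i-l))"
    by (rule sum.reindex_bij_witness[where i="\<lambda>l. n-l" and j="\<lambda>j. n-j"]) auto
  have rec: "doc tau n (n-i) = - (1 / bdf3 tau i 0) * (\<Sum>l<n-i. doc tau n l * bdf3 tau (n-l) (n-i-l))"
    using doc.simps[of tau n "n-i"] lt by simp
  have "doc tau n (n-i) * bdf3 tau i 0 = - (\<Sum>l<n-i. doc tau n l * bdf3 tau (n-l) (n-i-l))"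
    unfolding rec using d0nz[OF i3] by simp
  then show ?thesis using s1 s2 lt by simp
qed

lemma eta:
  assumes d0nz: "\<And>k. k \<ge> 3 \<Longrightarrow> bdf3 tau k 0 \<noteq> 0" and n3: "3 \<le> n"
  shows "(\<Sum>j=3..n. doc tau n (n-j) * xi j) = wv tau xi n"
proof -
  let ?w = "wv tau xi"
  have "(\<Sum>j=3..n. doc tau n (n-j) * xi j) = (\<Sum>j=3..n. doc tau n (n-j) * (\<Sum>i=3..j. bdf3 tau j (j-i) * ?w i))"
  proof (rule sum.cong)
    fix j assume "j \<in> {3..n}"
    then have j: "3 \<le> j" by simp
    show "doc tau n (n-j) * xi j = doc tau n (n-j) * (\<Sum>i=3..j. bdf3 tau j (j-i) * ?w i)"
      using xi_rep[of j tau xi, OF j d0nz[OF j]] xi_sum[OF j, of tau xi] by simp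
  qed simp
  also have "\<dots> = (\<Sum>j=3..n. \<Sum>i=3..j. doc tau n (n-j) * bdf3 tau j (j-i) * ?w i)"
    by (simp add: sum_distrib_left mult.assoc)
  also have "\<dots> = (\<Sum>j\<in>{3..n}. \<Sum>i\<in>{i. i \<in> {3..n} \<and> i \<le> j}. doc tau n (n-j) * bdf3 tau j (j-i) * ?w i)"
    by (rule sum.cong) (auto intro!: sum.cong)
  also have "\<dots> = (\<Sum>i\<in>{3..n}. \<Sum>j\<in>{j. j \<in> {3..n} \<and> i \<le> j}. doc tau n (n-j) * bdf3 tau j (j-i) * ?w i)"
    by (rule sum.swap_restrict) auto
  also have "\<dots> = (\<Sum>i=3..n. ?w i * (\<Sum>j=i..n. doc tau n (n-j) * bdf3 tau j (j-i)))"
    by (rule sum.cong) (auto simp: sum_distrib_left intro!: sum.cong)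
  also have "\<dots> = (\<Sum>i=3..n. ?w i * (if i = n then 1 else 0))"
    by (rule sum.cong) (auto simp: doc_inv d0nz)
  also have "\<dots> = ?w n" using n3 by (simp add: if_distrib cong: if_cong)
  finally show ?thesis .
qed
lemma Gnonneg:
  fixes t0 t1 x y :: real
  assumes "0 < t0" "0 < t1" "t0/t1 < 3/2"
  shows "0 \<le> t0*((37/40)*x^2 + (-59/100)*x*y) + (7/20)*t1*y^2"
proof -
  define A where "A = (37/40)*t0"
  define B where "B = (-59/100)*t0"
  define D where "D = (7/20)*t1"
  have h: "t0 < 3/2*t1" using assms by (simp add: divide_simps)
  have K: "0 \<le> 4*A*D - B^2"
  proof -
    have "4*A*D - B^2 = t0 * ((259/200)*t1 - (3481/10000)*t0)"
      unfolding A_def B_def D_def by (simp add: power2_eq_square algebra_simps)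
    moreover have "0 \<le> (259/200)*t1 - (3481/10000)*t0" using h assms by simp
    ultimately show ?thesis using assms by simp
  qed
  have A: "0 < A" unfolding A_def using assms by simp
  have id: "4*A*(A*x^2 + B*x*y + D*y^2) = (2*A*x + B*y)^2 + (4*A*D - B^2)*y^2" by algebra
  have "0 \<le> 4*A*(A*x^2 + B*x*y + D*y^2)" unfolding id using K by simp
  then have "0 \<le> A*x^2 + B*x*y + D*y^2" using A by (simp add: zero_le_mult_iff)
  then show ?thesis unfolding A_def B_def D_def by (simp add: algebra_simps)
qed

theorem lemma4p1:
  fixes tau :: "nat \<Rightarrow> real" and xi :: "nat \<Rightarrow> real" and n :: nat
  assumes tau_pos: "\<And>k. k \<ge> 1 \<Longrightarrow> tau k > 0"
    and ratio_bound: "\<And>k. k \<ge> 2 \<Longrightarrow> 0 < ratio tau k \<and> ratio tau k < Re_root"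
    and n3: "n \<ge> 3"
    and nonzero: "\<exists>k\<in>{3..n}. xi k \<noteq> 0"
  shows "2 * (\<Sum>k=3..n. xi k * (\<Sum>j=3..k. tau k * doc tau k (k - j) * xi j)) > 0"
proof -
  define w where "w = wv tau xi"
  have rb: "0 < ratio tau k" "ratio tau k < 3/2" if "k \<ge> 2" for k
    using ratio_bound[OF that] Re_root_lt by auto
  have d0p: "0 < bdf3 tau k 0" if "k \<ge> 3" for k
    unfolding bdf3_def using rb[of k] rb[of "k-1"] that by (simp add: d0_pos)
  then have d0nz: "\<And>k. k \<ge> 3 \<Longrightarrow> bdf3 tau k 0 \<noteq> 0" by (metis less_irrefl)
  define T where "T k = tau k * w k * (bdf3 tau k 0 * w k + bdf3 tau k 1 * w (k-1) + bdf3 tau k 2 * w (k-2))" for k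
  define G where "G m = tau m*((37/40)*(w m)^2 + (-59/100)*w m*w (m-1)) + (7/20)*tau (m-1)*(w (m-1))^2" for m
  have inner: "(\<Sum>j=3..k. tau k * doc tau k (k - j) * xi j) = tau k * w k" if "3 \<le> k" for k
  proof -
    have "(\<Sum>j=3..k. tau k * doc tau k (k - j) * xi j) = tau k * (\<Sum>j=3..k. doc tau k (k - j) * xi j)"
      by (simp add: sum_distrib_left mult.assoc)
    then show ?thesis using eta[OF d0nz that, of xi] unfolding w_def by simp
  qed
  have S: "(\<Sum>k=3..n. xi k * (\<Sum>j=3..k. tau k * doc tau k (k - j) * xi j)) = (\<Sum>k=3..n. T k)"
  proof (rule sum.cong)
    fix k assume "k \<in> {3..n}"
    then have k: "3 \<le> k" by simp
    show "xi k * (\<Sum>j=3..k. tau k * doc tau k (k - j) * xi j) = T k"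
      unfolding inner[OF k] T_def using xi_rep[of k tau xi, OF k d0nz[OF k]] unfolding w_def
      by (simp add: algebra_simps)
  qed simp
  have loc: "T k \<ge> G k - G (k-1) + (1/100)*tau k*(w k)^2" if k: "3 \<le> k" for k
  proof -
    have t: "0 < tau k" "0 < tau (k-1)" "0 < tau (k-2)" using tau_pos k by auto
    have r: "tau k / tau (k-1) < 3/2" using rb(2)[of k] k unfolding ratio_def by simp
    have k2: "k - 1 - 1 = k - 2" "2 \<le> k - 1" using k by auto
    have s: "tau (k-1) / tau (k-2) < 3/2" using rb(2)[OF k2(2)] unfolding ratio_def k2(1) .
    have b: "bdf3 tau k 0 = d0 (tau k / tau (k-1)) (tau (k-1) / tau (k-2))"
      "bdf3 tau k 1 = d1 (tau k / tau (k-1)) (tau (k-1) / tau (k-2))"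
      "bdf3 tau k 2 = d2 (tau k / tau (k-1)) (tau (k-1) / tau (k-2))"
      unfolding bdf3_def ratio_def k2(1) by simp_all
    have km: "k - 1 - 1 = k - 2" by simp
    show ?thesis
      using key[OF t r s, of "w k" "w (k-1)" "w (k-2)"] unfolding T_def G_def b km by simp
  qed
  have ind: "(\<Sum>k=3..m. T k) \<ge> G m + (1/100) * (\<Sum>k=3..m. tau k * (w k)^2)" if "2 \<le> m" for m
    using that
  proof (induction m rule: nat_induct_at_least)
    case base
    have "w 2 = 0" "w 1 = 0" unfolding w_def by (simp_all add: wv_small)
    then show ?case unfolding G_def by simp
  next
    case (Suc m)
    have m3: "3 \<le> Suc m" using Suc by simp
    have e: "(\<Sum>k=3..Suc m. T k) = (\<Sum>k=3..m. T k) + T (Suc m)"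
      "(\<Sum>k=3..Suc m. tau k * (w k)^2) = (\<Sum>k=3..m. tau k * (w k)^2) + tau (Suc m) * (w (Suc m))^2"
      using Suc.hyps by simp_all
    from loc[OF m3] Suc.IH show ?case unfolding e by (simp add: field_simps)
  qed
  have Gn: "0 \<le> G n"
  proof -
    have "0 < tau n" "0 < tau (n-1)" using tau_pos n3 by auto
    moreover have "tau n / tau (n-1) < 3/2" using rb(2)[of n] n3 unfolding ratio_def by simp
    ultimately show ?thesis unfolding G_def by (rule Gnonneg)
  qed
  have wnz: "\<exists>k\<in>{3..n}. w k \<noteq> 0"
  proof (rule ccontr)
    assume "\<not> ?thesis"
    then have z: "\<And>k. k \<in> {3..n} \<Longrightarrow> w k = 0" by auto
    have z': "w k = 0" if "k \<le> n" for k
      using z[of k] that unfolding w_def by (cases "k < 3") (auto simp: wv_small)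
    have "xi k = 0" if "k \<in> {3..n}" for k
    proof -
      have k: "3 \<le> k" "k \<le> n" using that by auto
      show ?thesis using xi_rep[of k tau xi, OF k(1) d0nz[OF k(1)]] z'[of k] z'[of "k-1"] z'[of "k-2"] k
        unfolding w_def by simp
    qed
    then show False using nonzero by auto
  qed
  have pos: "0 < (\<Sum>k=3..n. tau k * (w k)^2)"
  proof -
    obtain k where k: "k \<in> {3..n}" "w k \<noteq> 0" using wnz by auto
    show ?thesis
    proof (rule sum_pos2[OF _ k(1)])
      show "0 < tau k * (w k)^2" using k tau_pos[of k] by simp
      show "0 \<le> tau i * (w i)^2" if "i \<in> {3..n}" for i
        using that tau_pos[of i] by simp
    qed simp
  qed
  have "(\<Sum>k=3..n. T k) > 0" using ind[of n] n3 Gn pos by simp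
  then show ?thesis unfolding S by simp
qed
end
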